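(* Let $X,Y$ be Polish spaces and $f\colon X\to Y$ continuous. Then $f$ is category-preserving if and only if the set of points of $X$ which are locally dense for $f$ is dense in $X$.
   Context: A continuous map $f\colon X\to Y$ between Polish spaces is category-preserving if $f^{-1}(A)$ is meager in $X$ for every meager $A\subseteq Y$ (equivalently, $f(U)$ is non-meager, or equivalently somewhere dense, for every nonempty open $U\subseteq X$). A point $x\in X$ is locally dense for $f$ if for every neighborhood $U$ of $x$ the set $\overline{f(U)}$ is a neighborhood of $f(x)$. *)

theory Defs
  imports "HOL-Analysis.Analysis"
begin

definition nowhere_dense :: "'a::topological_space set \<Rightarrow> bool" where
  "nowhere_dense A \<longleftrightarrow> interior (closure A) = {}"

definition meager :: "'a::topological_space set \<Rightarrow> bool" where
  "meager A \<longleftrightarrow> (\<exists>\<F>. countable \<F> \<and> (\<forall>B\<in>\<F>. nowhere_dense B) \<and> A \<subseteq> \<Union>\<F>)"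

definition category_preserving :: "('a::topological_space \<Rightarrow> 'b::topological_space) \<Rightarrow> bool" where
  "category_preserving f \<longleftrightarrow> (\<forall>A. meager A \<longrightarrow> meager (f -` A))"

definition locally_dense_point :: "('a::topological_space \<Rightarrow> 'b::topological_space) \<Rightarrow> 'a \<Rightarrow> bool" where
  "locally_dense_point f x \<longleftrightarrow>
     (\<forall>U. open U \<and> x \<in> U \<longrightarrow> f x \<in> interior (closure (f ` U)))"

end

theory Submission
  imports Defs
begin

lemma meager_interior_empty:
  fixes A :: "'a::polish_space set"
  assumes "meager A"
  shows "interior A = {}"
proof -
  obtain F where F: "countable F" "\<forall>B\<in>F. nowhere_dense B" "A \<subseteq> \<Union>F"
    using assms unfolding meager_def by blast
  have "euclidean interior_of \<Union>(closure ` F) = {}"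
  proof (rule Baire_category_alt)
    show "completely_metrizable_space (euclidean::'a topology) \<or> locally_compact_space (euclidean::'a topology) \<and> regular_space (euclidean::'a topology)"
      using completely_metrizable_space_euclidean by blast
    show "countable (closure ` F)" using F by simp
    fix T assume "T \<in> closure ` F"
    then show "closedin euclidean T \<and> euclidean interior_of T = {}"
      using F unfolding nowhere_dense_def by auto
  qed
  then have "interior (\<Union>(closure ` F)) = {}" by simp
  moreover have "A \<subseteq> \<Union>(closure ` F)" using F(3) closure_subset by blast
  ultimately show ?thesis using interior_mono[of A "\<Union>(closure ` F)"] by simp
qed

lemma meager_subset:
  assumes "meager B" "A \<subseteq> B" shows "meager A"
proof -
  obtain F where F: "countable F" "\<forall>B\<in>F. nowhere_dense B" "B \<subseteq> \<Union>F"
    using assms(1) unfolding meager_def by blast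
  have "A \<subseteq> \<Union>F" using assms(2) F(3) by (rule subset_trans)
  then show ?thesis unfolding meager_def using F(1,2) by blast
qed

lemma nowhere_dense_meager: "nowhere_dense A \<Longrightarrow> meager A"
  unfolding meager_def
  apply (rule exI[of _ "{A}"])
  apply (intro conjI)
    apply simp
   apply simp
  apply simp
  done

lemma meager_countable_Union:
  assumes "countable I" "\<And>i. i \<in> I \<Longrightarrow> meager (M i)"
  shows "meager (\<Union>i\<in>I. M i)"
proof -
  have "\<forall>i\<in>I. \<exists>F. countable F \<and> (\<forall>B\<in>F. nowhere_dense B) \<and> M i \<subseteq> \<Union>F"
    using assms(2) unfolding meager_def by simp
  from bchoice[OF this] obtain F where F: "\<forall>i\<in>I. countable (F i) \<and> (\<forall>B\<in>F i. nowhere_dense B) \<and> M i \<subseteq> \<Union>(F i)"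
    by (elim exE)
  have c: "countable (\<Union>i\<in>I. F i)"
    apply (rule countable_UN[OF assms(1)])
    using F by simp
  have n: "\<forall>B\<in>\<Union>i\<in>I. F i. nowhere_dense B" using F by simp
  have s: "(\<Union>i\<in>I. M i) \<subseteq> \<Union>(\<Union>i\<in>I. F i)"
  proof (rule UN_least)
    fix i assume "i \<in> I"
    then have "M i \<subseteq> \<Union>(F i)" using F by simp
    also have "\<dots> \<subseteq> \<Union>(\<Union>i\<in>I. F i)" using \<open>i \<in> I\<close> by (intro Union_mono) (rule UN_upper)
    finally show "M i \<subseteq> \<Union>(\<Union>i\<in>I. F i)" .
  qed
  show ?thesis unfolding meager_def
    by (rule exI[of _ "\<Union>i\<in>I. F i"]) (intro conjI c n s)
qed

lemma frontier_closed_nowhere_dense: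
  fixes C :: "'a::topological_space set"
  assumes "closed C"
  shows "nowhere_dense (C - interior C)"
proof -
  have cl: "closure (C - interior C) = C - interior C"
    using assms by (intro closure_closed closed_Diff open_interior)
  have "interior (C - interior C) \<subseteq> interior C"
    by (rule interior_mono[OF Diff_subset])
  moreover have "interior (C - interior C) \<subseteq> - interior C"
    using interior_subset[of "C - interior C"] by blast
  ultimately show ?thesis unfolding nowhere_dense_def cl by blast
qed

lemma nd_vimage:
  fixes f :: "'a::topological_space \<Rightarrow> 'b::topological_space"
  assumes cont: "continuous_on UNIV f"
    and dense: "closure {x. locally_dense_point f x} = UNIV"
    and N: "nowhere_dense N"
  shows "nowhere_dense (f -` N)"
proof -
  define V where "V = interior (f -` closure N)"
  have cl: "closed (f -` closure N)"
    by (rule closed_vimage[OF closed_closure cont])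
  have i0: "V = {}"
  proof (rule ccontr)
    assume ne: "V \<noteq> {}"
    have "V \<inter> closure {x. locally_dense_point f x} \<noteq> {}"
      using ne dense by simp
    then have "V \<inter> {x. locally_dense_point f x} \<noteq> {}"
      using open_Int_closure_eq_empty[OF open_interior] unfolding V_def by metis
    then obtain x where x1: "x \<in> V" and x2: "locally_dense_point f x"
      by auto
    have oV: "open V" unfolding V_def by (rule open_interior)
    have fx: "f x \<in> interior (closure (f ` V))"
      using x2 oV x1 unfolding locally_dense_point_def by simp
    have "f ` V \<subseteq> closure N"
      using interior_subset[of "f -` closure N"] unfolding V_def by auto
    then have "closure (f ` V) \<subseteq> closure N"
      by (rule closure_minimal[OF _ closed_closure])
    then have "interior (closure (f ` V)) \<subseteq> interior (closure N)"
      by (rule interior_mono)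
    with fx have "f x \<in> interior (closure N)" by (rule subsetD[rotated])
    then show False using N unfolding nowhere_dense_def by simp
  qed
  have c0: "closure (f -` N) \<subseteq> f -` closure N"
  proof (rule closure_minimal[OF _ cl])
    show "f -` N \<subseteq> f -` closure N" using closure_subset[of N] by auto
  qed
  have "interior (closure (f -` N)) \<subseteq> V"
    unfolding V_def by (rule interior_mono[OF c0])
  then show ?thesis unfolding nowhere_dense_def using i0 by simp
qed

lemma cp_from_nd:
  fixes f :: "'a::topological_space \<Rightarrow> 'b::topological_space"
  assumes nd: "\<And>N. nowhere_dense N \<Longrightarrow> nowhere_dense (f -` N)"
  shows "category_preserving f"
  unfolding category_preserving_def
proof (intro allI impI)
  fix A :: "'b set" assume "meager A"
  then obtain F where F: "countable F" "\<forall>B\<in>F. nowhere_dense B" "A \<subseteq> \<Union>F"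
    unfolding meager_def by auto
  have c: "countable ((\<lambda>B. f -` B) ` F)" using F(1) by simp
  have n: "\<forall>B\<in>(\<lambda>B. f -` B) ` F. nowhere_dense B" using F(2) nd by simp
  have s: "f -` A \<subseteq> \<Union>((\<lambda>B. f -` B) ` F)" using F(3) by auto
  show "meager (f -` A)" unfolding meager_def
    by (rule exI[of _ "(\<lambda>B. f -` B) ` F"]) (intro conjI c n s)
qed

theorem mainTheorem7:
  fixes f :: "'a::polish_space \<Rightarrow> 'b::polish_space"
  assumes "continuous_on UNIV f"
  shows "category_preserving f \<longleftrightarrow> closure {x. locally_dense_point f x} = UNIV"
proof
  assume cp: "category_preserving f"
  obtain \<B> :: "'a set set" where B: "countable \<B>" "topological_basis \<B>"
    using ex_countable_basis by blast
  define M where "M b = f -` (closure (f ` b) - interior (closure (f ` b)))" for b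
  have sub: "- {x. locally_dense_point f x} \<subseteq> (\<Union>b\<in>\<B>. M b)"
  proof
    fix x assume "x \<in> - {x. locally_dense_point f x}"
    then obtain U where U: "open U" "x \<in> U" "f x \<notin> interior (closure (f ` U))"
      unfolding locally_dense_point_def by auto
    obtain b where b: "b \<in> \<B>" "x \<in> b" "b \<subseteq> U"
      using topological_basisE[OF B(2) U(1,2)] by blast
    have "interior (closure (f ` b)) \<subseteq> interior (closure (f ` U))"
      using b(3) by (intro interior_mono closure_mono image_mono)
    moreover have "f x \<in> closure (f ` b)" using b(2) closure_subset by blast
    ultimately have "x \<in> M b" using U(3) unfolding M_def by blast
    then show "x \<in> (\<Union>b\<in>\<B>. M b)" using b(1) by blast
  qed
  have "meager (\<Union>b\<in>\<B>. M b)"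
    apply (rule meager_countable_Union[OF B(1)])
    using cp frontier_closed_nowhere_dense[OF closed_closure] nowhere_dense_meager
    unfolding category_preserving_def M_def by blast
  then have "interior (- {x. locally_dense_point f x}) = {}"
    using meager_subset[OF _ sub] meager_interior_empty by blast
  then show "closure {x. locally_dense_point f x} = UNIV"
    by (simp add: closure_interior)
next
  assume dense: "closure {x. locally_dense_point f x} = UNIV"
  show "category_preserving f"
    by (rule cp_from_nd[OF nd_vimage[OF assms dense]])
qed

end
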